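(* Let $G=(S,T,E,\varphi)$ be a weighted bipartite 2-graph with $|S|=m$, $|T|=n$, let $\mathcal{A}\in NBQ(m,n)$ be its adjacency tensor, and let $\mathcal{Q}=\mathcal{D}^0+\mathcal{D}^x+\mathcal{D}^y+\mathcal{A}$ and $\mathcal{L}=\mathcal{D}^0-\mathcal{D}^x-\mathcal{D}^y+\mathcal{A}$ be its signless Laplacian and Laplacian biquadratic tensors. Then both $\mathcal{Q}$ and $\mathcal{L}$ are positive semi-definite and SOS.
   Context: A biquadratic tensor is $\mathcal{A}=(a_{i_1j_1i_2j_2})\in\mathbb{R}^{m\times n\times m\times n}$ (indices $i_1,i_2\in[m]=\{1,\dots,m\}$, $j_1,j_2\in[n]$); $NBQ(m,n)$ denotes the set of entrywise nonnegative ones. Its associated form is $f(\mathbf{x},\mathbf{y})=\sum_{i_1,i_2=1}^m\sum_{j_1,j_2=1}^n a_{i_1j_1i_2j_2}x_{i_1}y_{j_1}x_{i_2}y_{j_2}$ for $\mathbf{x}\in\mathbb{R}^m,\mathbf{y}\in\mathbb{R}^n$. The tensor is positive semi-definite if $f(\mathbf{x},\mathbf{y})\ge 0$ for all $\mathbf{x},\mathbf{y}$, and SOS if $f$ is a sum of squares of polynomials in $(\mathbf{x},\mathbf{y})$. A bipartite 2-graph $G=(S,T,E)$ has vertex sets $S=\{u_1,\dots,u_m\}$, $T=\{v_1,\dots,v_n\}$ and an edge set $E$ whose elements are pairs $(\{u_{i_1},u_{i_2}\},\{v_{j_1},v_{j_2}\})$ of a 2-element subset of $S$ (so $i_1\ne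 i_2$) and a 2-element subset of $T$ (so $j_1\neq j_2$), with no edge repeated. A weighted bipartite 2-graph additionally has a weight function $\varphi:E\to[0,\infty)$. Its adjacency tensor $\mathcal{A}=(a_{i_1j_1i_2j_2})\in NBQ(m,n)$ is defined by $a_{i_1j_1i_2j_2}=\varphi(e)$ if $i_1\ne i_2$, $j_1\ne j_2$ and $e=(\{u_{i_1},u_{i_2}\},\{v_{j_1},v_{j_2}\})\in E$, and $a_{i_1j_1i_2j_2}=0$ otherwise. (For an unweighted graph, $\varphi\equiv 1$.) The tensors $\mathcal{D}^0,\mathcal{D}^x,\mathcal{D}^y\in NBQ(m,n)$ are defined by: $d^0_{i_1j_1i_2j_2}=\sum_{i_2'=1}^m\sum_{j_2'=1}^n a_{i_1j_1i_2'j_2'}$ if $i_1=i_2$ and $j_1=j_2$, and $0$ otherwise; $d^x_{i_1j_1i_2j_2}=\sum_{i_2'=1}^m a_{i_1j_1i_2'j_2}$ if $i_1=i_2$, and $0$ otherwise; $d^y_{i_1j_1i_2j_2}=\sum_{j_2'=1}^n a_{i_1j_1i_2j_2'}$ if $j_1=j_2$, and $0$ otherwise. *)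

theory Defs
  imports Main "HOL.Real"
begin

text \<open>Indices: S = {0..<m}, T = {0..<n}. A biquadratic tensor of size m x n x m x n is
  a function nat => nat => nat => nat => real, only entries with indices in range matter.\<close>

type_synonym bqtensor = "nat \<Rightarrow> nat \<Rightarrow> nat \<Rightarrow> nat \<Rightarrow> real"

definition weighted_bip2graph ::
  "nat \<Rightarrow> nat \<Rightarrow> (nat set \<times> nat set) set \<Rightarrow> (nat set \<times> nat set \<Rightarrow> real) \<Rightarrow> bool" where
  "weighted_bip2graph m n E \<phi> \<longleftrightarrow>
     (\<forall>e\<in>E. fst e \<subseteq> {0..<m} \<and> card (fst e) = 2 \<and> snd e \<subseteq> {0..<n} \<and> card (snd e) = 2)
     \<and> (\<forall>e\<in>E. \<phi> e \<ge> 0)"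

definition adj_tensor :: "(nat set \<times> nat set) set \<Rightarrow> (nat set \<times> nat set \<Rightarrow> real) \<Rightarrow> bqtensor" where
  "adj_tensor E \<phi> = (\<lambda>i1 j1 i2 j2.
     if i1 \<noteq> i2 \<and> j1 \<noteq> j2 \<and> ({i1, i2}, {j1, j2}) \<in> E then \<phi> ({i1, i2}, {j1, j2}) else 0)"

definition D0 :: "nat \<Rightarrow> nat \<Rightarrow> bqtensor \<Rightarrow> bqtensor" where
  "D0 m n A = (\<lambda>i1 j1 i2 j2.
     if i1 = i2 \<and> j1 = j2 then (\<Sum>i2'<m. \<Sum>j2'<n. A i1 j1 i2' j2') else 0)"

definition Dx :: "nat \<Rightarrow> nat \<Rightarrow> bqtensor \<Rightarrow> bqtensor" where
  "Dx m n A = (\<lambda>i1 j1 i2 j2. if i1 = i2 then (\<Sum>i2'<m. A i1 j1 i2' j2) else 0)"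

definition Dy :: "nat \<Rightarrow> nat \<Rightarrow> bqtensor \<Rightarrow> bqtensor" where
  "Dy m n A = (\<lambda>i1 j1 i2 j2. if j1 = j2 then (\<Sum>j2'<n. A i1 j1 i2 j2') else 0)"

definition signless_laplacian :: "nat \<Rightarrow> nat \<Rightarrow> bqtensor \<Rightarrow> bqtensor" where
  "signless_laplacian m n A = (\<lambda>i1 j1 i2 j2.
     D0 m n A i1 j1 i2 j2 + Dx m n A i1 j1 i2 j2 + Dy m n A i1 j1 i2 j2 + A i1 j1 i2 j2)"

definition laplacian :: "nat \<Rightarrow> nat \<Rightarrow> bqtensor \<Rightarrow> bqtensor" where
  "laplacian m n A = (\<lambda>i1 j1 i2 j2.
     D0 m n A i1 j1 i2 j2 - Dx m n A i1 j1 i2 j2 - Dy m n A i1 j1 i2 j2 + A i1 j1 i2 j2)"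

definition bq_form :: "nat \<Rightarrow> nat \<Rightarrow> bqtensor \<Rightarrow> (nat \<Rightarrow> real) \<Rightarrow> (nat \<Rightarrow> real) \<Rightarrow> real" where
  "bq_form m n A x y = (\<Sum>i1<m. \<Sum>j1<n. \<Sum>i2<m. \<Sum>j2<n.
       A i1 j1 i2 j2 * x i1 * y j1 * x i2 * y j2)"

definition bq_psd :: "nat \<Rightarrow> nat \<Rightarrow> bqtensor \<Rightarrow> bool" where
  "bq_psd m n A \<longleftrightarrow> (\<forall>x y. bq_form m n A x y \<ge> 0)"

inductive poly_fun :: "nat \<Rightarrow> nat \<Rightarrow> ((nat \<Rightarrow> real) \<Rightarrow> (nat \<Rightarrow> real) \<Rightarrow> real) \<Rightarrow> bool"
  for m n where
  pf_const: "poly_fun m n (\<lambda>x y. c)"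
| pf_varx: "i < m \<Longrightarrow> poly_fun m n (\<lambda>x y. x i)"
| pf_vary: "j < n \<Longrightarrow> poly_fun m n (\<lambda>x y. y j)"
| pf_add: "poly_fun m n p \<Longrightarrow> poly_fun m n q \<Longrightarrow> poly_fun m n (\<lambda>x y. p x y + q x y)"
| pf_mult: "poly_fun m n p \<Longrightarrow> poly_fun m n q \<Longrightarrow> poly_fun m n (\<lambda>x y. p x y * q x y)"

definition bq_sos :: "nat \<Rightarrow> nat \<Rightarrow> bqtensor \<Rightarrow> bool" where
  "bq_sos m n A \<longleftrightarrow> (\<exists>gs. (\<forall>g\<in>set gs. poly_fun m n g) \<and>
      (\<forall>x y. bq_form m n A x y = (\<Sum>g\<leftarrow>gs. (g x y)\<^sup>2)))"

end

theory Submission imports Defs Complex_Main begin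

lemma ifz: "(if P then a else (0::real)) * b = (if P then a * b else 0)" by simp
lemma ifc: "(if P \<and> Q then a else (0::real)) = (if P then if Q then a else 0 else 0)" by simp
lemma sif: "(\<Sum>j\<in>S. if P then f j else (0::real)) = (if P then (\<Sum>j\<in>S. f j) else 0)" by simp

lemma f_add: "bq_form m n (\<lambda>i1 j1 i2 j2. P i1 j1 i2 j2 + Q i1 j1 i2 j2) x y = bq_form m n P x y + bq_form m n Q x y"
  by (simp add: bq_form_def algebra_simps sum.distrib)

lemma f_diff: "bq_form m n (\<lambda>i1 j1 i2 j2. P i1 j1 i2 j2 - Q i1 j1 i2 j2) x y = bq_form m n P x y - bq_form m n Q x y"
  by (simp add: bq_form_def algebra_simps sum_subtractf)

lemma f_D0: "bq_form m n (D0 m n A) x y = (\<Sum>i1<m. \<Sum>j1<n. \<Sum>i2<m. \<Sum>j2<n. A i1 j1 i2 j2 * (x i1 * x i1) * (y j1 * y j1))"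
proof -
  have "(\<Sum>i2<m. \<Sum>j2<n. D0 m n A i1 j1 i2 j2 * x i1 * y j1 * x i2 * y j2)
       = (\<Sum>i2<m. \<Sum>j2<n. A i1 j1 i2 j2 * (x i1 * x i1) * (y j1 * y j1))" if "i1 < m" "j1 < n" for i1 j1
  proof -
    have "(\<Sum>i2<m. \<Sum>j2<n. D0 m n A i1 j1 i2 j2 * x i1 * y j1 * x i2 * y j2)
       = (\<Sum>i2'<m. \<Sum>j2'<n. A i1 j1 i2' j2') * (x i1 * x i1) * (y j1 * y j1)"
      using that by (simp add: D0_def ifz ifc sif)
    then show ?thesis by (simp add: sum_distrib_right)
  qed
  then show ?thesis unfolding bq_form_def by (simp)
qed

lemma f_Dx: "bq_form m n (Dx m n A) x y = (\<Sum>i1<m. \<Sum>j1<n. \<Sum>i2<m. \<Sum>j2<n. A i1 j1 i2 j2 * (x i1 * x i1) * (y j1 * y j2))"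
proof -
  have "(\<Sum>i2<m. \<Sum>j2<n. Dx m n A i1 j1 i2 j2 * x i1 * y j1 * x i2 * y j2)
       = (\<Sum>i2<m. \<Sum>j2<n. A i1 j1 i2 j2 * (x i1 * x i1) * (y j1 * y j2))" if "i1 < m" for i1 j1
  proof -
    have "(\<Sum>i2<m. \<Sum>j2<n. Dx m n A i1 j1 i2 j2 * x i1 * y j1 * x i2 * y j2)
       = (\<Sum>j2<n. (\<Sum>i2'<m. A i1 j1 i2' j2) * x i1 * y j1 * x i1 * y j2)"
      using that by (simp add: Dx_def ifz sif)
    also have "\<dots> = (\<Sum>j2<n. \<Sum>i2<m. A i1 j1 i2 j2 * (x i1 * x i1) * (y j1 * y j2))"
      by (simp add: sum_distrib_right sum_distrib_left mult_ac)
    finally show ?thesis by (simp add: sum.swap[of _ "{..<n}"])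
  qed
  then show ?thesis unfolding bq_form_def by simp
qed

lemma f_Dy: "bq_form m n (Dy m n A) x y = (\<Sum>i1<m. \<Sum>j1<n. \<Sum>i2<m. \<Sum>j2<n. A i1 j1 i2 j2 * (x i1 * x i2) * (y j1 * y j1))"
proof -
  have "(\<Sum>j2<n. Dy m n A i1 j1 i2 j2 * x i1 * y j1 * x i2 * y j2)
         = (\<Sum>j2<n. A i1 j1 i2 j2 * (x i1 * x i2) * (y j1 * y j1))" if "j1 < n" for i1 j1 i2
  proof -
    have "(\<Sum>j2<n. Dy m n A i1 j1 i2 j2 * x i1 * y j1 * x i2 * y j2)
         = (\<Sum>j2'<n. A i1 j1 i2 j2') * x i1 * y j1 * x i2 * y j1"
      using that by (simp add: Dy_def ifz)
    then show ?thesis by (simp add: sum_distrib_right sum_distrib_left mult_ac)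
  qed
  then show ?thesis unfolding bq_form_def by simp
qed

lemma f_Q: "bq_form m n (signless_laplacian m n A) x y = (\<Sum>i1<m. \<Sum>j1<n. \<Sum>i2<m. \<Sum>j2<n. A i1 j1 i2 j2 * (x i1 * (x i1 + x i2)) * (y j1 * (y j1 + y j2)))"
proof -
  have e: "A i1 j1 i2 j2 * (x i1 * (x i1 + x i2)) * (y j1 * (y j1 + y j2)) =
     A i1 j1 i2 j2 * (x i1 * x i1) * (y j1 * y j1) + A i1 j1 i2 j2 * (x i1 * x i1) * (y j1 * y j2) + A i1 j1 i2 j2 * (x i1 * x i2) * (y j1 * y j1) + A i1 j1 i2 j2 * x i1 * y j1 * x i2 * y j2" for i1 j1 i2 j2
    by (simp add: algebra_simps)
  have "bq_form m n (signless_laplacian m n A) x y = bq_form m n (D0 m n A) x y + bq_form m n (Dx m n A) x y + bq_form m n (Dy m n A) x y + bq_form m n A x y"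
    unfolding signless_laplacian_def f_add by simp
  also have "\<dots> = (\<Sum>i1<m. \<Sum>j1<n. \<Sum>i2<m. \<Sum>j2<n. A i1 j1 i2 j2 * (x i1 * (x i1 + x i2)) * (y j1 * (y j1 + y j2)))"
    unfolding f_D0 f_Dx f_Dy unfolding bq_form_def e by (simp only: sum.distrib)
  finally show ?thesis .
qed

lemma f_L: "bq_form m n (laplacian m n A) x y = (\<Sum>i1<m. \<Sum>j1<n. \<Sum>i2<m. \<Sum>j2<n. A i1 j1 i2 j2 * (x i1 * (x i1 - x i2)) * (y j1 * (y j1 - y j2)))"
proof -
  have e: "A i1 j1 i2 j2 * (x i1 * (x i1 - x i2)) * (y j1 * (y j1 - y j2)) =
     A i1 j1 i2 j2 * (x i1 * x i1) * (y j1 * y j1) - A i1 j1 i2 j2 * (x i1 * x i1) * (y j1 * y j2) - A i1 j1 i2 j2 * (x i1 * x i2) * (y j1 * y j1) + A i1 j1 i2 j2 * x i1 * y j1 * x i2 * y j2" for i1 j1 i2 j2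
    by (simp add: algebra_simps)
  have "bq_form m n (laplacian m n A) x y = bq_form m n (D0 m n A) x y - bq_form m n (Dx m n A) x y - bq_form m n (Dy m n A) x y + bq_form m n A x y"
    unfolding laplacian_def f_add f_diff by simp
  also have "\<dots> = (\<Sum>i1<m. \<Sum>j1<n. \<Sum>i2<m. \<Sum>j2<n. A i1 j1 i2 j2 * (x i1 * (x i1 - x i2)) * (y j1 * (y j1 - y j2)))"
    unfolding f_D0 f_Dx f_Dy unfolding bq_form_def e by (simp only: sum.distrib sum_subtractf)
  finally show ?thesis .
qed

definition pairsum :: "nat \<Rightarrow> (nat \<Rightarrow> nat \<Rightarrow> real) \<Rightarrow> nat set \<Rightarrow> real" where
  "pairsum m U s = (\<Sum>i1<m. \<Sum>i2<m. if i1 \<noteq> i2 \<and> {i1, i2} = s then U i1 i2 else 0)"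

lemma adj_as_sum: assumes "finite E" shows "adj_tensor E \<phi> i1 j1 i2 j2 =
  (\<Sum>e\<in>E. (if i1 \<noteq> i2 \<and> {i1, i2} = fst e then 1 else 0) * (if j1 \<noteq> j2 \<and> {j1, j2} = snd e then 1 else 0) * \<phi> e)"
proof -
  have "(\<Sum>e\<in>E. (if i1 \<noteq> i2 \<and> {i1, i2} = fst e then 1 else 0) * (if j1 \<noteq> j2 \<and> {j1, j2} = snd e then 1 else 0) * \<phi> e)
    = (\<Sum>e\<in>E. if i1 \<noteq> i2 \<and> j1 \<noteq> j2 then (if ({i1,i2},{j1,j2}) = e then \<phi> e else 0) else 0)"
    by (intro sum.cong refl) auto
  also have "\<dots> = adj_tensor E \<phi> i1 j1 i2 j2"
    using assms by (simp add: adj_tensor_def sif)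
  finally show ?thesis by simp
qed

lemma swap5: "(\<Sum>a\<in>A. \<Sum>b\<in>B. \<Sum>c\<in>C. \<Sum>d\<in>D. \<Sum>e\<in>E. f a b c d e) = (\<Sum>e\<in>E. \<Sum>a\<in>A. \<Sum>b\<in>B. \<Sum>c\<in>C. \<Sum>d\<in>D. f a b c d e)"
  by (simp add: sum.swap[where B = E])

lemma edge_sum: assumes fin: "finite E" shows
  "(\<Sum>i1<m. \<Sum>j1<n. \<Sum>i2<m. \<Sum>j2<n. adj_tensor E \<phi> i1 j1 i2 j2 * U i1 i2 * V j1 j2)
   = (\<Sum>e\<in>E. \<phi> e * pairsum m U (fst e) * pairsum n V (snd e))"
proof -
  have "(\<Sum>i1<m. \<Sum>j1<n. \<Sum>i2<m. \<Sum>j2<n. adj_tensor E \<phi> i1 j1 i2 j2 * U i1 i2 * V j1 j2)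
    = (\<Sum>i1<m. \<Sum>j1<n. \<Sum>i2<m. \<Sum>j2<n. \<Sum>e\<in>E. \<phi> e * ((if i1 \<noteq> i2 \<and> {i1, i2} = fst e then U i1 i2 else 0) * (if j1 \<noteq> j2 \<and> {j1, j2} = snd e then V j1 j2 else 0)))"
    unfolding adj_as_sum[OF fin] sum_distrib_right by (intro sum.cong refl) auto
  also have "\<dots> = (\<Sum>e\<in>E. \<Sum>i1<m. \<Sum>j1<n. \<Sum>i2<m. \<Sum>j2<n. \<phi> e * ((if i1 \<noteq> i2 \<and> {i1, i2} = fst e then U i1 i2 else 0) * (if j1 \<noteq> j2 \<and> {j1, j2} = snd e then V j1 j2 else 0)))"
    by (rule swap5)
  also have "\<dots> = (\<Sum>e\<in>E. \<phi> e * pairsum m U (fst e) * pairsum n V (snd e))"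
  proof (intro sum.cong refl)
    fix e
    show "(\<Sum>i1<m. \<Sum>j1<n. \<Sum>i2<m. \<Sum>j2<n. \<phi> e * ((if i1 \<noteq> i2 \<and> {i1, i2} = fst e then U i1 i2 else 0) * (if j1 \<noteq> j2 \<and> {j1, j2} = snd e then V j1 j2 else 0)))
       = \<phi> e * pairsum m U (fst e) * pairsum n V (snd e)"
    proof -
      let ?u = "\<lambda>i1 i2. if i1 \<noteq> i2 \<and> {i1, i2} = fst e then U i1 i2 else 0"
      let ?v = "\<lambda>j1 j2. if j1 \<noteq> j2 \<and> {j1, j2} = snd e then V j1 j2 else 0"
      have "\<phi> e * pairsum m U (fst e) * pairsum n V (snd e) = (\<Sum>i1<m. \<Sum>j1<n. \<Sum>i2<m. \<Sum>j2<n. \<phi> e * (?u i1 i2 * ?v j1 j2))"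
      proof -
        have 1: "pairsum m U (fst e) * pairsum n V (snd e) = (\<Sum>i1<m. \<Sum>j1<n. \<Sum>i2<m. \<Sum>j2<n. ?u i1 i2 * ?v j1 j2)"
          unfolding pairsum_def by (simp only: sum_product)
        show ?thesis by (simp only: mult.assoc 1 sum_distrib_left)
      qed
      then show ?thesis by (rule sym)
    qed
  qed
  finally show ?thesis .
qed

lemma pairsum2: assumes "a \<noteq> b" "a < m" "b < m" shows "pairsum m U {a, b} = U a b + U b a"
proof -
  have "pairsum m U {a, b} = (\<Sum>i1<m. \<Sum>i2<m. (if i1 = a then (if i2 = b then U i1 i2 else 0) else 0) + (if i1 = b then (if i2 = a then U i1 i2 else 0) else 0))"
    unfolding pairsum_def using assms by (intro sum.cong refl) (auto simp: doubleton_eq_iff)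
  also have "\<dots> = U a b + U b a" using assms by (simp add: sum.distrib sif)
  finally show ?thesis .
qed

lemma pf_sumx: "finite S \<Longrightarrow> S \<subseteq> {..<m} \<Longrightarrow> poly_fun m n (\<lambda>x y. \<Sum>i\<in>S. x i)"
proof (induction S rule: finite_induct)
  case empty
  then show ?case using pf_const[of m n 0] by simp
next
  case (insert a S)
  then show ?case using pf_add[OF pf_varx[of a m n], of "\<lambda>x y. \<Sum>i\<in>S. x i"] by simp
qed

lemma pf_sumy: "finite S \<Longrightarrow> S \<subseteq> {..<n} \<Longrightarrow> poly_fun m n (\<lambda>x y. \<Sum>i\<in>S. y i)"
proof (induction S rule: finite_induct)
  case empty
  then show ?case using pf_const[of m n 0] by simp
next
  case (insert a S)
  then show ?case using pf_add[OF pf_vary[of a n m], of "\<lambda>x y. \<Sum>i\<in>S. y i"] by simp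
qed

lemma pf_diffx: "i < m \<Longrightarrow> j < m \<Longrightarrow> poly_fun m n (\<lambda>x y. x i - x j)"
  using pf_add[OF pf_varx[of i m n] pf_mult[OF pf_const[of m n "-1"] pf_varx[of j m n]]] by simp

lemma pf_diffy: "i < n \<Longrightarrow> j < n \<Longrightarrow> poly_fun m n (\<lambda>x y. y i - y j)"
  using pf_add[OF pf_vary[of i n m] pf_mult[OF pf_const[of m n "-1"] pf_vary[of j n m]]] by simp

lemma pf_scale3: "poly_fun m n p \<Longrightarrow> poly_fun m n q \<Longrightarrow> poly_fun m n (\<lambda>x y. c * p x y * q x y)"
  using pf_mult[OF pf_mult[OF pf_const[of m n c]]] by blast

lemma two_elems: assumes "card s = 2" "s \<subseteq> {0..<m}"
  obtains a b where "s = {a, b}" "a \<noteq> b" "a < m" "b < m"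
  using assms by (auto simp: card_2_iff)

lemma sos_of_edges:
  assumes fin: "finite E" and pf: "\<And>e. e \<in> E \<Longrightarrow> poly_fun m n (g e)"
    and eq: "\<And>x y. bq_form m n A x y = (\<Sum>e\<in>E. (g e x y)^2)"
  shows "bq_sos m n A" "bq_psd m n A"
proof -
  obtain xs where xs: "set xs = E" "distinct xs" using finite_distinct_list[OF fin] by blast
  have "\<forall>g'\<in>set (map g xs). poly_fun m n g'" using pf xs by auto
  moreover have "bq_form m n A x y = (\<Sum>g'\<leftarrow>map g xs. (g' x y)\<^sup>2)" for x y
    unfolding eq using xs by (simp add: sum_list_distinct_conv_sum_set comp_def)
  ultimately show "bq_sos m n A" unfolding bq_sos_def by blast
  show "bq_psd m n A" unfolding bq_psd_def eq by (simp add: sum_nonneg)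
qed

theorem lemma3p1:
  fixes m n :: nat and E :: "(nat set \<times> nat set) set" and \<phi> :: "nat set \<times> nat set \<Rightarrow> real"
  assumes "weighted_bip2graph m n E \<phi>"
  shows "bq_psd m n (signless_laplacian m n (adj_tensor E \<phi>))
       \<and> bq_sos m n (signless_laplacian m n (adj_tensor E \<phi>))
       \<and> bq_psd m n (laplacian m n (adj_tensor E \<phi>))
       \<and> bq_sos m n (laplacian m n (adj_tensor E \<phi>))"
proof -
  have E1: "\<And>e. e \<in> E \<Longrightarrow> fst e \<subseteq> {0..<m} \<and> card (fst e) = 2 \<and> snd e \<subseteq> {0..<n} \<and> card (snd e) = 2"
    and E2: "\<And>e. e \<in> E \<Longrightarrow> \<phi> e \<ge> 0"
    using assms unfolding weighted_bip2graph_def by auto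
  have fin: "finite E"
  proof (rule finite_subset)
    show "E \<subseteq> Pow {0..<m} \<times> Pow {0..<n}"
    proof
      fix e assume "e \<in> E" then show "e \<in> Pow {0..<m} \<times> Pow {0..<n}" using E1[of e] by (cases e) auto
    qed
  qed simp
  define gQ where "gQ e = (\<lambda>(x::nat\<Rightarrow>real) (y::nat\<Rightarrow>real). sqrt (\<phi> e) * (\<Sum>i\<in>fst e. x i) * (\<Sum>j\<in>snd e. y j))" for e
  define gL where "gL e = (\<lambda>(x::nat\<Rightarrow>real) (y::nat\<Rightarrow>real). sqrt (\<phi> e) * (x (Min (fst e)) - x (Max (fst e))) * (y (Min (snd e)) - y (Max (snd e))))" for e
  have pfQ: "poly_fun m n (gQ e)" if e: "e \<in> E" for e
    unfolding gQ_def using E1[OF e]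
    by (intro pf_scale3 pf_sumx pf_sumy) (auto intro: finite_subset)
  have eqQ: "bq_form m n (signless_laplacian m n (adj_tensor E \<phi>)) x y = (\<Sum>e\<in>E. (gQ e x y)^2)" for x y
  proof -
    have "bq_form m n (signless_laplacian m n (adj_tensor E \<phi>)) x y
      = (\<Sum>e\<in>E. \<phi> e * pairsum m (\<lambda>i1 i2. x i1 * (x i1 + x i2)) (fst e) * pairsum n (\<lambda>j1 j2. y j1 * (y j1 + y j2)) (snd e))"
      unfolding f_Q by (rule edge_sum[OF fin])
    also have "\<dots> = (\<Sum>e\<in>E. (gQ e x y)^2)"
    proof (rule sum.cong[OF refl])
      fix e assume e: "e \<in> E"
      obtain a b where ab: "fst e = {a, b}" "a \<noteq> b" "a < m" "b < m" using E1[OF e] two_elems by metis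
      obtain c d where cd: "snd e = {c, d}" "c \<noteq> d" "c < n" "d < n" using E1[OF e] two_elems by metis
      show "\<phi> e * pairsum m (\<lambda>i1 i2. x i1 * (x i1 + x i2)) (fst e) * pairsum n (\<lambda>j1 j2. y j1 * (y j1 + y j2)) (snd e) = (gQ e x y)^2"
      proof -
        have "(gQ e x y)^2 = \<phi> e * (x a + x b)^2 * (y c + y d)^2"
          unfolding gQ_def using ab cd E2[OF e] by (simp add: power_mult_distrib real_sqrt_pow2)
        then show ?thesis using ab cd by (simp add: pairsum2 power2_eq_square algebra_simps)
      qed
    qed
    finally show ?thesis .
  qed
  have pfL: "poly_fun m n (gL e)" if e: "e \<in> E" for e
  proof -
    obtain a b where ab: "fst e = {a, b}" "a \<noteq> b" "a < m" "b < m" using E1[OF e] two_elems by metis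
    obtain c d where cd: "snd e = {c, d}" "c \<noteq> d" "c < n" "d < n" using E1[OF e] two_elems by metis
    have "Min (fst e) < m" "Max (fst e) < m" "Min (snd e) < n" "Max (snd e) < n"
      using ab cd by (auto simp: min_def max_def)
    then show ?thesis unfolding gL_def by (intro pf_scale3 pf_diffx pf_diffy)
  qed
  have eqL: "bq_form m n (laplacian m n (adj_tensor E \<phi>)) x y = (\<Sum>e\<in>E. (gL e x y)^2)" for x y
  proof -
    have "bq_form m n (laplacian m n (adj_tensor E \<phi>)) x y
      = (\<Sum>e\<in>E. \<phi> e * pairsum m (\<lambda>i1 i2. x i1 * (x i1 - x i2)) (fst e) * pairsum n (\<lambda>j1 j2. y j1 * (y j1 - y j2)) (snd e))"
      unfolding f_L by (rule edge_sum[OF fin])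
    also have "\<dots> = (\<Sum>e\<in>E. (gL e x y)^2)"
    proof (rule sum.cong[OF refl])
      fix e assume e: "e \<in> E"
      obtain a b where ab: "fst e = {a, b}" "a \<noteq> b" "a < m" "b < m" using E1[OF e] two_elems by metis
      obtain c d where cd: "snd e = {c, d}" "c \<noteq> d" "c < n" "d < n" using E1[OF e] two_elems by metis
      have hx: "(x (Min (fst e)) - x (Max (fst e)))^2 = (x a - x b)^2"
        using ab by (cases "a \<le> b") (auto simp: min_def max_def power2_commute)
      have hy: "(y (Min (snd e)) - y (Max (snd e)))^2 = (y c - y d)^2"
        using cd by (cases "c \<le> d") (auto simp: min_def max_def power2_commute)
      have "(gL e x y)^2 = \<phi> e * (x (Min (fst e)) - x (Max (fst e)))^2 * (y (Min (snd e)) - y (Max (snd e)))^2"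
        unfolding gL_def using E2[OF e] by (simp add: power_mult_distrib)
      also have "\<dots> = \<phi> e * (x a - x b)^2 * (y c - y d)^2" by (simp only: hx hy)
      finally show "\<phi> e * pairsum m (\<lambda>i1 i2. x i1 * (x i1 - x i2)) (fst e) * pairsum n (\<lambda>j1 j2. y j1 * (y j1 - y j2)) (snd e) = (gL e x y)^2"
        using ab cd by (simp add: pairsum2 power2_eq_square algebra_simps)
    qed
    finally show ?thesis .
  qed
  show ?thesis
    using sos_of_edges[OF fin pfQ eqQ] sos_of_edges[OF fin pfL eqL] by blast
qed
end
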